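(* Let $d\ge2$, $\mu>0$ and $\lambda\ge0$. Then $\mathcal{A}\operatorname{Poi}(\lambda)$ is the Poisson mixture \[ \mathcal{A}\operatorname{Poi}(\lambda)=\operatorname{Poi}\Big(\frac{(U+1)\lambda}{d}+\frac{\mu}{d+1}\Big),\qquad U\sim\operatorname{Bin}\Big(d-1,\;1-\exp\Big(-\frac{\lambda}{d}-\frac{\mu}{d+1}\Big)\Big), \] i.e. it is the law of a random variable $Y$ such that, conditional on $U=u$, $Y\sim\operatorname{Poi}\big(\frac{(u+1)\lambda}{d}+\frac{\mu}{d+1}\big)$.
   Context: The operator $\mathcal{A}$ (depending on fixed $d\ge2$, $\mu>0$): for a probability measure $\pi$ on $\{0,1,2,\dots\}\cup\{\infty\}$, consider a star graph with central vertex $\varnothing'$ and $d+1$ leaves $\varnothing,v_1,\dots,v_d$. Let $X\sim\operatorname{Poi}(\mu)$ and $X_1,\dots,X_d\sim\pi$, all independent; place $X$ particles at $\varnothing'$ and $X_i$ at $v_i$. The particles at $\varnothing'$ and $v_1$ are first-wave particles, active initially. Each particle at $\varnothing'$ moves to a uniformly random leaf among $\varnothing,v_1,\dots,v_d$ and halts; each particle at $v_1$ moves to $\varnothing'$ and then to a uniformly random leaf among $\varnothing,v_2,\dots,v_d$ and halts. For $2\le i\le d$, if some first-wave particle ends at $v_i$, the $X_i$ particles at $v_i$ (second-wave) are activated: each moves to $\varnothing'$ and then to a uniformly random leaf other than $v_i$, and halts; second-wave particles activate nothing. All choices are independent. $\mathcal{A}\pi$ is the law of the number of particles ending at $\varnothing$.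 $\operatorname{Poi}(0)$ denotes the point mass at $0$. *)

theory Defs
  imports "HOL-Probability.Probability"
begin

definition Poi :: "real \<Rightarrow> nat pmf" where
  "Poi r = (if r = 0 then return_pmf 0 else poisson_pmf r)"

primrec seq_pmf :: "'a pmf list \<Rightarrow> 'a list pmf" where
  "seq_pmf [] = return_pmf []"
| "seq_pmf (p # ps) = do {x \<leftarrow> p; xs \<leftarrow> seq_pmf ps; return_pmf (x # xs)}"

text \<open>Leaves are numbered 0 (the leaf varnothing), 1 (= v_1), ..., d (= v_d).
  The central vertex varnothing' is not a leaf.  XX ! (i-1) is the number X_i of particles at v_i.
  A list of final leaf positions is produced; the output is the number of particles ending at leaf 0.\<close>
definition opA :: "nat \<Rightarrow> real \<Rightarrow> nat pmf \<Rightarrow> nat pmf" where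
  "opA d \<mu> \<pi> = do {
     X \<leftarrow> Poi \<mu>;
     XX \<leftarrow> replicate_pmf d \<pi>;
     a \<leftarrow> replicate_pmf X (pmf_of_set {0..d});
     b \<leftarrow> replicate_pmf (XX ! 0) (pmf_of_set ({0..d} - {1}));
     c \<leftarrow> seq_pmf (map (\<lambda>i. if i \<in> set (a @ b)
                               then replicate_pmf (XX ! (i - 1)) (pmf_of_set ({0..d} - {i}))
                               else return_pmf []) [2..<d+1]);
     return_pmf (length (filter (\<lambda>v. v = 0) (a @ b @ concat c)))
   }"

end

theory Submission imports Defs begin
lemma pmf_Poi: "r \<ge> 0 \<Longrightarrow> pmf (Poi r) k = r ^ k / fact k * exp (- r)"
  by (auto simp: Poi_def indicator_def)

lemma Poi_thin:
  assumes r: "r \<ge> 0" and p: "0 \<le> p" "p \<le> 1"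
  shows "do {n \<leftarrow> Poi r; k \<leftarrow> binomial_pmf n p; return_pmf (k, n - k)}
       = pair_pmf (Poi (r*p)) (Poi (r*(1-p)))"
proof (rule pmf_eqI)
  fix x :: "nat \<times> nat"
  obtain i j where x: "x = (i,j)" by (cases x)
  have inner: "pmf (binomial_pmf n p \<bind> (\<lambda>k. return_pmf (k, n - k))) (i,j)
      = (if n = i + j then real (n choose i) * p^i * (1-p)^j else 0)" for n
  proof -
    have "binomial_pmf n p \<bind> (\<lambda>k. return_pmf (k, n - k)) = map_pmf (\<lambda>k. (k, n-k)) (binomial_pmf n p)"
      by (simp add: map_pmf_def)
    moreover have "(\<lambda>k. (k, n-k)) -` {(i,j)} = (if n - i = j then {i} else {})" by auto
    ultimately show ?thesis using p
      by (auto simp: pmf_map measure_pmf_single)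
  qed
  have "pmf (do {n \<leftarrow> Poi r; k \<leftarrow> binomial_pmf n p; return_pmf (k, n - k)}) (i,j)
      = (\<integral>n. (if n = i + j then real (n choose i) * p^i * (1-p)^j else 0) \<partial>measure_pmf (Poi r))"
    by (subst pmf_bind) (simp only: inner)
  also have "\<dots> = (\<Sum>a\<in>{i+j}. (if a = i + j then real (a choose i) * p^i * (1-p)^j else 0) * pmf (Poi r) a)"
    by (rule integral_measure_pmf_real) (auto split: if_splits)
  also have "\<dots> = real ((i+j) choose i) * p^i * (1-p)^j * (r^(i+j) / fact (i+j) * exp (-r))"
    using r by (simp add: pmf_Poi)
  also have "\<dots> = (r*p)^i / fact i * exp (-(r*p)) * ((r*(1-p))^j / fact j * exp (-(r*(1-p))))"
  proof -
    have "real ((i+j) choose i) = fact (i+j) / (fact i * fact j)"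
      by (simp add: binomial_fact)
    moreover have "exp (-r) = exp (-(r*p)) * exp (-(r*(1-p)))"
      by (simp add: exp_add[symmetric] algebra_simps)
    moreover have "(r*p)^i = r^i*p^i" "(r*(1-p))^j = r^j*(1-p)^j" "r^(i+j) = r^i*r^j"
      by (simp_all add: power_mult_distrib power_add)
    ultimately show ?thesis
      by (simp add: divide_simps)
  qed
  also have "\<dots> = pmf (pair_pmf (Poi (r*p)) (Poi (r*(1-p)))) (i,j)"
    using r p by (simp add: pmf_pair pmf_Poi)
  finally show "pmf (do {n \<leftarrow> Poi r; k \<leftarrow> binomial_pmf n p; return_pmf (k, n - k)}) x
      = pmf (pair_pmf (Poi (r*p)) (Poi (r*(1-p)))) x" by (simp add: x)
qed

definition mix :: "real \<Rightarrow> 'a pmf \<Rightarrow> 'a pmf \<Rightarrow> 'a pmf" where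
  "mix p q1 q2 = bernoulli_pmf p \<bind> (\<lambda>b. if b then q1 else q2)"

lemma set_binomial_le: "k \<in> set_pmf (binomial_pmf n p) \<Longrightarrow> 0 \<le> p \<Longrightarrow> p \<le> 1 \<Longrightarrow> k \<le> n"
  by (auto simp: set_pmf_binomial_eq split: if_splits)

lemma rep_mix:
  assumes p: "0 \<le> p" "p \<le> 1"
  shows "map_pmf mset (replicate_pmf n (mix p q1 q2)) =
     binomial_pmf n p \<bind> (\<lambda>k. replicate_pmf k q1 \<bind> (\<lambda>xs. replicate_pmf (n-k) q2 \<bind>
        (\<lambda>ys. return_pmf (mset xs + mset ys))))"
proof (induction n)
  case 0
  then show ?case using p by (simp add: binomial_pmf_0 bind_return_pmf)
next
  case (Suc n)
  define B where "B = binomial_pmf n p"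
  have "map_pmf mset (replicate_pmf (Suc n) (mix p q1 q2)) = bernoulli_pmf p \<bind> (\<lambda>b.
     (if b then q1 else q2) \<bind> (\<lambda>x. map_pmf mset (replicate_pmf n (mix p q1 q2)) \<bind> (\<lambda>M. return_pmf (add_mset x M))))"
    by (simp add: mix_def map_pmf_def bind_assoc_pmf bind_return_pmf)
  also have "\<dots> = bernoulli_pmf p \<bind> (\<lambda>b.
     (if b then q1 else q2) \<bind> (\<lambda>x. B \<bind> (\<lambda>k. replicate_pmf k q1 \<bind> (\<lambda>xs. replicate_pmf (n-k) q2 \<bind>
        (\<lambda>ys. return_pmf (add_mset x (mset xs + mset ys)))))))"
    by (simp add: Suc.IH B_def bind_assoc_pmf bind_return_pmf)
  also have "\<dots> = bernoulli_pmf p \<bind> (\<lambda>b. B \<bind> (\<lambda>k. replicate_pmf ((if b then 1 else 0) + k) q1 \<bind>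
        (\<lambda>xs. replicate_pmf (Suc n - ((if b then 1 else 0) + k)) q2 \<bind> (\<lambda>ys. return_pmf (mset xs + mset ys)))))"
  proof (rule bind_pmf_cong[OF refl])
    fix b :: bool
    show "(if b then q1 else q2) \<bind> (\<lambda>x. B \<bind> (\<lambda>k. replicate_pmf k q1 \<bind> (\<lambda>xs. replicate_pmf (n-k) q2 \<bind>
        (\<lambda>ys. return_pmf (add_mset x (mset xs + mset ys)))))) =
      B \<bind> (\<lambda>k. replicate_pmf ((if b then 1 else 0) + k) q1 \<bind>
        (\<lambda>xs. replicate_pmf (Suc n - ((if b then 1 else 0) + k)) q2 \<bind> (\<lambda>ys. return_pmf (mset xs + mset ys))))"
    proof (cases b)
      case True
      then show ?thesis
        by (simp add: bind_assoc_pmf bind_return_pmf) (subst bind_commute_pmf, rule refl)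
    next
      case False
      have "q2 \<bind> (\<lambda>x. B \<bind> (\<lambda>k. replicate_pmf k q1 \<bind> (\<lambda>xs. replicate_pmf (n-k) q2 \<bind>
        (\<lambda>ys. return_pmf (add_mset x (mset xs + mset ys)))))) =
        B \<bind> (\<lambda>k. q2 \<bind> (\<lambda>x. replicate_pmf k q1 \<bind> (\<lambda>xs. replicate_pmf (n-k) q2 \<bind>
        (\<lambda>ys. return_pmf (add_mset x (mset xs + mset ys))))))"
        by (rule bind_commute_pmf)
      also have "\<dots> = B \<bind> (\<lambda>k. replicate_pmf k q1 \<bind> (\<lambda>xs. q2 \<bind> (\<lambda>x. replicate_pmf (n-k) q2 \<bind>
        (\<lambda>ys. return_pmf (add_mset x (mset xs + mset ys))))))"
        by (subst bind_commute_pmf) (rule refl)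
      also have "\<dots> = B \<bind> (\<lambda>k. replicate_pmf k q1 \<bind> (\<lambda>xs. replicate_pmf (Suc n - k) q2 \<bind>
        (\<lambda>ys. return_pmf (mset xs + mset ys))))"
      proof (rule bind_pmf_cong[OF refl])
        fix k assume "k \<in> set_pmf B"
        then have "k \<le> n" using p by (simp add: B_def set_binomial_le)
        then have "Suc n - k = Suc (n - k)" by simp
        then show "replicate_pmf k q1 \<bind> (\<lambda>xs. q2 \<bind> (\<lambda>x. replicate_pmf (n-k) q2 \<bind>
          (\<lambda>ys. return_pmf (add_mset x (mset xs + mset ys))))) = replicate_pmf k q1 \<bind> (\<lambda>xs. replicate_pmf (Suc n - k) q2 \<bind>
          (\<lambda>ys. return_pmf (mset xs + mset ys)))"
          by (simp add: bind_assoc_pmf bind_return_pmf)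
      qed
      finally show ?thesis using False by simp
    qed
  qed
  also have "\<dots> = binomial_pmf (Suc n) p \<bind> (\<lambda>k. replicate_pmf k q1 \<bind> (\<lambda>xs. replicate_pmf (Suc n - k) q2 \<bind>
        (\<lambda>ys. return_pmf (mset xs + mset ys))))"
    using p by (simp add: binomial_pmf_Suc B_def bind_assoc_pmf bind_return_pmf)
  finally show ?case .
qed

definition PP :: "real \<Rightarrow> 'a pmf \<Rightarrow> 'a multiset pmf" where
  "PP r q = Poi r \<bind> (\<lambda>n. map_pmf mset (replicate_pmf n q))"

lemma PP_mix:
  assumes r: "r \<ge> 0" and p: "0 \<le> p" "p \<le> 1"
  shows "PP r (mix p q1 q2) = PP (r*p) q1 \<bind> (\<lambda>M1. PP (r*(1-p)) q2 \<bind> (\<lambda>M2. return_pmf (M1+M2)))"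
proof -
  define F where "F = (\<lambda>(k,m). replicate_pmf k q1 \<bind> (\<lambda>xs. replicate_pmf m q2 \<bind>
        (\<lambda>ys. return_pmf (mset xs + mset ys))))"
  have "PP r (mix p q1 q2) = Poi r \<bind> (\<lambda>n. binomial_pmf n p \<bind> (\<lambda>k. return_pmf (k, n-k) \<bind> F))"
    unfolding PP_def using p by (simp add: rep_mix bind_return_pmf F_def)
  also have "\<dots> = (Poi r \<bind> (\<lambda>n. binomial_pmf n p \<bind> (\<lambda>k. return_pmf (k, n-k)))) \<bind> F"
    by (simp add: bind_assoc_pmf)
  also have "\<dots> = pair_pmf (Poi (r*p)) (Poi (r*(1-p))) \<bind> F"
    using Poi_thin[OF r p] by simp
  also have "\<dots> = Poi (r*p) \<bind> (\<lambda>k. Poi (r*(1-p)) \<bind> (\<lambda>m. replicate_pmf k q1 \<bind> (\<lambda>xs. replicate_pmf m q2 \<bind>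
        (\<lambda>ys. return_pmf (mset xs + mset ys)))))"
    by (simp add: pair_pmf_def bind_assoc_pmf bind_return_pmf F_def)
  also have "\<dots> = Poi (r*p) \<bind> (\<lambda>k. replicate_pmf k q1 \<bind> (\<lambda>xs. Poi (r*(1-p)) \<bind> (\<lambda>m. replicate_pmf m q2 \<bind>
        (\<lambda>ys. return_pmf (mset xs + mset ys)))))"
    by (subst bind_commute_pmf) (rule refl)
  also have "\<dots> = PP (r*p) q1 \<bind> (\<lambda>M1. PP (r*(1-p)) q2 \<bind> (\<lambda>M2. return_pmf (M1+M2)))"
    unfolding PP_def by (simp add: map_pmf_def bind_assoc_pmf bind_return_pmf)
  finally show ?thesis .
qed

lemma rep_return: "replicate_pmf n (return_pmf v) = return_pmf (replicate n v)"
  by (induction n) (simp_all add: bind_return_pmf)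

lemma PP_return: "PP r (return_pmf v) = map_pmf (\<lambda>n. replicate_mset n v) (Poi r)"
  unfolding PP_def by (simp add: rep_return map_pmf_def bind_return_pmf)

lemma mix_uniform:
  assumes "finite S" "S \<noteq> {}" "v \<notin> S"
  shows "pmf_of_set (insert v S) = mix (1 / real (Suc (card S))) (return_pmf v) (pmf_of_set S)"
proof (rule pmf_eqI)
  fix x
  have c: "card (insert v S) = Suc (card S)" using assms by simp
  have cp: "card S > 0" using assms by (simp add: card_gt_0_iff)
  have "pmf (mix (1 / real (Suc (card S))) (return_pmf v) (pmf_of_set S)) x =
     (1 / real (Suc (card S))) * indicator {x} v + (1 - 1 / real (Suc (card S))) * (indicator S x / card S)"
    unfolding mix_def using assms
    by (simp add: pmf_bind integral_measure_pmf_real[where A=UNIV] UNIV_bool)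
  also have "\<dots> = indicator (insert v S) x / card (insert v S)"
    using assms cp by (auto simp: c indicator_def field_simps) (use zero_le_square[of "real (card S)"] in linarith)+
  finally show "pmf (pmf_of_set (insert v S)) x = pmf (mix (1 / real (Suc (card S))) (return_pmf v) (pmf_of_set S)) x"
    using assms by simp
qed

fun PPL :: "real \<Rightarrow> 'a list \<Rightarrow> 'a multiset pmf" where
  "PPL r [] = return_pmf {#}"
| "PPL r (v # vs) = Poi r \<bind> (\<lambda>n. PPL r vs \<bind> (\<lambda>M. return_pmf (replicate_mset n v + M)))"

lemma set_PPL: "M \<in> set_pmf (PPL r vs) \<Longrightarrow> set_mset M \<subseteq> set vs"
proof (induction vs arbitrary: M)
  case (Cons a vs)
  from Cons.prems obtain n M' where "M' \<in> set_pmf (PPL r vs)" "M = replicate_mset n a + M'" by auto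
  then show ?case using Cons.IH[of M'] by (auto split: if_splits)
qed simp

lemma PP_uniform:
  fixes r :: real
  assumes r: "r \<ge> 0"
  shows "distinct vs \<Longrightarrow> vs \<noteq> [] \<Longrightarrow> PP (r * real (length vs)) (pmf_of_set (set vs)) = PPL r vs"
proof (induction vs)
  case Nil
  then show ?case by simp
next
  case (Cons v vs)
  show ?case
  proof (cases "vs = []")
    case True
    then show ?thesis
      by (simp add: pmf_of_set_singleton PP_return map_pmf_def bind_return_pmf)
  next
    case False
    have d: "distinct vs" "v \<notin> set vs" using Cons.prems by auto
    have cl: "card (set vs) = length vs" using d by (simp add: distinct_card)
    have e1: "pmf_of_set (set (v#vs)) = mix (1 / real (Suc (length vs))) (return_pmf v) (pmf_of_set (set vs))"
      using mix_uniform[of "set vs" v] d False cl by simp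
    have e2: "r * real (length (v#vs)) * (1 / real (Suc (length vs))) = r"
      by simp
    have e3: "r * real (length (v#vs)) * (1 - 1 / real (Suc (length vs))) = r * real (length vs)"
      by (simp add: field_simps)
    have "PP (r * real (length (v#vs))) (pmf_of_set (set (v#vs))) =
       PP (r * real (length (v#vs))) (mix (1 / real (Suc (length vs))) (return_pmf v) (pmf_of_set (set vs)))"
      by (simp only: e1)
    also have "\<dots> = PP (r * real (length (v#vs)) * (1 / real (Suc (length vs)))) (return_pmf v) \<bind>
       (\<lambda>M1. PP (r * real (length (v#vs)) * (1 - 1 / real (Suc (length vs)))) (pmf_of_set (set vs)) \<bind> (\<lambda>M2. return_pmf (M1+M2)))"
      by (rule PP_mix) (use r in auto)
    also have "\<dots> = PP r (return_pmf v) \<bind> (\<lambda>M1. PP (r * real (length vs)) (pmf_of_set (set vs)) \<bind> (\<lambda>M2. return_pmf (M1+M2)))"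
      by (simp only: e2 e3)
    also have "\<dots> = PPL r (v#vs)"
      using Cons.IH d False by (simp add: PP_return bind_map_pmf)
    finally show ?thesis .
  qed
qed

lemma Poi_add:
  assumes a: "a \<ge> 0" and b: "b \<ge> 0"
  shows "Poi a \<bind> (\<lambda>x. Poi b \<bind> (\<lambda>y. return_pmf (x+y))) = Poi (a+b)"
proof (cases "a + b = 0")
  case True
  then have "a = 0" "b = 0" using a b by auto
  then show ?thesis by (simp add: Poi_def bind_return_pmf)
next
  case False
  define r where "r = a + b"
  define p where "p = a / r"
  have r: "r > 0" using False a b r_def by auto
  have p: "0 \<le> p" "p \<le> 1" using a b r by (auto simp: p_def r_def field_simps)
  have ea: "r * p = a" and eb: "r * (1 - p) = b" using r by (auto simp: p_def r_def field_simps)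
  have "Poi a \<bind> (\<lambda>x. Poi b \<bind> (\<lambda>y. return_pmf (x+y))) =
     pair_pmf (Poi (r*p)) (Poi (r*(1-p))) \<bind> (\<lambda>(k,m). return_pmf (k+m))"
    by (simp add: ea eb pair_pmf_def bind_assoc_pmf bind_return_pmf)
  also have "\<dots> = Poi r \<bind> (\<lambda>n. binomial_pmf n p \<bind> (\<lambda>k. return_pmf (k + (n - k))))"
    by (simp add: Poi_thin[OF _ p, symmetric] r[THEN less_imp_le] bind_assoc_pmf bind_return_pmf)
  also have "\<dots> = Poi r \<bind> (\<lambda>n. binomial_pmf n p \<bind> (\<lambda>k. return_pmf n))"
    by (intro bind_pmf_cong refl) (use p set_binomial_le in auto)
  also have "\<dots> = Poi (a+b)" by (simp add: r_def bind_return_pmf')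
  finally show ?thesis .
qed

lemma Poi_pos:
  assumes s: "s \<ge> 0"
  shows "map_pmf (\<lambda>k. 0 < k) (Poi s) = bernoulli_pmf (1 - exp (- s))"
proof (rule pmf_eqI)
  fix b :: bool
  have p0: "pmf (Poi s) 0 = exp (-s)" using s by (simp add: pmf_Poi)
  have e: "exp (-s) \<le> 1" using s by simp
  show "pmf (map_pmf (\<lambda>k. 0 < k) (Poi s)) b = pmf (bernoulli_pmf (1 - exp (- s))) b"
  proof (cases b)
    case True
    have "(\<lambda>k::nat. 0 < k) -` {True} = UNIV - {0}" by auto
    then have "pmf (map_pmf (\<lambda>k. 0 < k) (Poi s)) True = 1 - pmf (Poi s) 0"
      using measure_pmf.prob_compl[of "{0}" "Poi s"] by (simp add: pmf_map measure_pmf_single)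
    then show ?thesis using True p0 e by simp
  next
    case False
    have "(\<lambda>k::nat. 0 < k) -` {False} = {0}" by auto
    then have "pmf (map_pmf (\<lambda>k. 0 < k) (Poi s)) False = pmf (Poi s) 0"
      by (simp add: pmf_map measure_pmf_single)
    then show ?thesis using False p0 e by simp
  qed
qed

lemma act_law:
  assumes a: "a \<ge> 0" and b: "b \<ge> 0"
  shows "Poi a \<bind> (\<lambda>n. Poi b \<bind> (\<lambda>m. if 0 < n + m then Z else return_pmf 0))
     = mix (1 - exp (- (a + b))) Z (return_pmf 0)"
proof -
  have "Poi a \<bind> (\<lambda>n. Poi b \<bind> (\<lambda>m. if 0 < n + m then Z else return_pmf 0)) =
     (Poi a \<bind> (\<lambda>x. Poi b \<bind> (\<lambda>y. return_pmf (x+y)))) \<bind> (\<lambda>k. if 0 < k then Z else return_pmf 0)"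
    by (simp add: bind_assoc_pmf bind_return_pmf)
  also have "\<dots> = map_pmf (\<lambda>k. 0 < k) (Poi (a+b)) \<bind> (\<lambda>c. if c then Z else return_pmf 0)"
    by (simp add: Poi_add[OF a b] bind_map_pmf)
  also have "\<dots> = mix (1 - exp (- (a + b))) Z (return_pmf 0)"
    using a b by (simp add: Poi_pos mix_def)
  finally show ?thesis .
qed

lemma comm3: fixes A :: "'a pmf" and B :: "'b pmf" and C :: "'c pmf" shows "A \<bind> (\<lambda>x. B \<bind> (\<lambda>y. C \<bind> (\<lambda>z. f x y z))) = C \<bind> (\<lambda>z. A \<bind> (\<lambda>x. B \<bind> (\<lambda>y. f x y z)))"
proof -
  have "A \<bind> (\<lambda>x. B \<bind> (\<lambda>y. C \<bind> (\<lambda>z. f x y z))) = A \<bind> (\<lambda>x. C \<bind> (\<lambda>z. B \<bind> (\<lambda>y. f x y z)))"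
    by (rule bind_pmf_cong[OF refl], rule bind_commute_pmf)
  also have "\<dots> = C \<bind> (\<lambda>z. A \<bind> (\<lambda>x. B \<bind> (\<lambda>y. f x y z)))"
    by (rule bind_commute_pmf)
  finally show ?thesis .
qed

lemma Core:
  assumes a: "a \<ge> 0" and b: "b \<ge> 0"
  shows "distinct is \<Longrightarrow> PPL a is \<bind> (\<lambda>A. PPL b is \<bind> (\<lambda>B.
      seq_pmf (map (\<lambda>j. if j \<in># A + B then Z else return_pmf 0) is) \<bind> (\<lambda>F. return_pmf (sum_list F))))
   = map_pmf sum_list (replicate_pmf (length is) (mix (1 - exp (- (a + b))) Z (return_pmf 0)))"
proof (induction "is")
  case Nil
  then show ?case by (simp add: bind_return_pmf)
next
  case (Cons i "is")
  have d: "distinct is" "i \<notin> set is" using Cons.prems by auto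
  define S where "S = (\<lambda>A B. seq_pmf (map (\<lambda>j. if j \<in># A + B then Z else return_pmf 0) is))"
  define X where "X = (\<lambda>n m::nat. if 0 < n + m then Z else return_pmf 0)"
  define W where "W = mix (1 - exp (- (a + b))) Z (return_pmf 0)"
  have mem: "(\<lambda>j. if j \<in># replicate_mset n i + A + (replicate_mset m i + B) then Z else return_pmf 0) =
     (\<lambda>j. if j = i then X n m else if j \<in># A + B then Z else return_pmf 0)"
    if "A \<in> set_pmf (PPL a is)" "B \<in> set_pmf (PPL b is)" for n m A B
  proof -
    have "i \<notin># A" "i \<notin># B" using set_PPL[OF that(1)] set_PPL[OF that(2)] d by auto
    then show ?thesis by (auto simp: X_def fun_eq_iff)
  qed
  have mapeq: "map (\<lambda>j. if j = i then X n m else if j \<in># A + B then Z else return_pmf 0) is =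
     map (\<lambda>j. if j \<in># A + B then Z else return_pmf 0) is" for n m A B
    using d by (intro map_cong) auto
  have "PPL a (i#is) \<bind> (\<lambda>A. PPL b (i#is) \<bind> (\<lambda>B.
      seq_pmf (map (\<lambda>j. if j \<in># A + B then Z else return_pmf 0) (i#is)) \<bind> (\<lambda>F. return_pmf (sum_list F))))
    = Poi a \<bind> (\<lambda>n. PPL a is \<bind> (\<lambda>A. Poi b \<bind> (\<lambda>m. PPL b is \<bind> (\<lambda>B.
        X n m \<bind> (\<lambda>x. S A B \<bind> (\<lambda>xs. return_pmf (x + sum_list xs)))))))"
    apply (simp only: PPL.simps list.map seq_pmf.simps bind_assoc_pmf bind_return_pmf)
    apply (intro bind_pmf_cong refl)
    subgoal for n A m B
      using d set_PPL[of A a "is"] set_PPL[of B b "is"] by (auto simp: X_def)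
    subgoal for n A m B
      unfolding S_def using d set_PPL[of A a "is"] set_PPL[of B b "is"]
      by (intro arg_cong[where f=seq_pmf] map_cong refl) auto
    subgoal by simp
    done
  also have "\<dots> = Poi a \<bind> (\<lambda>n. Poi b \<bind> (\<lambda>m. PPL a is \<bind> (\<lambda>A. PPL b is \<bind> (\<lambda>B.
        X n m \<bind> (\<lambda>x. S A B \<bind> (\<lambda>xs. return_pmf (x + sum_list xs)))))))"
    by (simp only: bind_commute_pmf[of "PPL a is" "Poi b"])
  also have "\<dots> = Poi a \<bind> (\<lambda>n. Poi b \<bind> (\<lambda>m. X n m \<bind> (\<lambda>x.
        (PPL a is \<bind> (\<lambda>A. PPL b is \<bind> (\<lambda>B. S A B \<bind> (\<lambda>F. return_pmf (sum_list F))))) \<bind> (\<lambda>s. return_pmf (x + s)))))"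
  proof (intro bind_pmf_cong refl)
    fix n m
    have "PPL a is \<bind> (\<lambda>A. PPL b is \<bind> (\<lambda>B. X n m \<bind> (\<lambda>x. S A B \<bind> (\<lambda>xs. return_pmf (x + sum_list xs)))))
       = X n m \<bind> (\<lambda>x. PPL a is \<bind> (\<lambda>A. PPL b is \<bind> (\<lambda>B. S A B \<bind> (\<lambda>xs. return_pmf (x + sum_list xs)))))"
      by (rule comm3)
    also have "\<dots> = X n m \<bind> (\<lambda>x. (PPL a is \<bind> (\<lambda>A. PPL b is \<bind> (\<lambda>B. S A B \<bind> (\<lambda>F. return_pmf (sum_list F))))) \<bind> (\<lambda>s. return_pmf (x + s)))"
      by (simp only: bind_assoc_pmf bind_return_pmf)
    finally show "PPL a is \<bind> (\<lambda>A. PPL b is \<bind> (\<lambda>B. X n m \<bind> (\<lambda>x. S A B \<bind> (\<lambda>xs. return_pmf (x + sum_list xs)))))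
       = X n m \<bind> (\<lambda>x. (PPL a is \<bind> (\<lambda>A. PPL b is \<bind> (\<lambda>B. S A B \<bind> (\<lambda>F. return_pmf (sum_list F))))) \<bind> (\<lambda>s. return_pmf (x + s)))" .
  qed
  also have "\<dots> = (Poi a \<bind> (\<lambda>n. Poi b \<bind> (\<lambda>m. X n m))) \<bind> (\<lambda>x.
        map_pmf sum_list (replicate_pmf (length is) W) \<bind> (\<lambda>s. return_pmf (x + s)))"
  proof -
    have IH': "PPL a is \<bind> (\<lambda>A. PPL b is \<bind> (\<lambda>B. S A B \<bind> (\<lambda>F. return_pmf (sum_list F)))) = map_pmf sum_list (replicate_pmf (length is) W)"
      using Cons.IH d unfolding S_def W_def by simp
    show ?thesis by (simp only: IH' bind_assoc_pmf)
  qed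
  also have "\<dots> = map_pmf sum_list (replicate_pmf (length (i#is)) W)"
  proof -
    have XW: "Poi a \<bind> (\<lambda>n. Poi b \<bind> (\<lambda>m. X n m)) = W"
      unfolding X_def W_def by (rule act_law[OF a b])
    show ?thesis
      by (simp only: XW length_Cons replicate_pmf.simps map_pmf_def bind_assoc_pmf bind_return_pmf sum_list.Cons)
  qed
  finally show ?case by (simp add: W_def)
qed

lemma binmix:
  assumes p: "0 \<le> p" "p \<le> 1" and bb: "bt \<ge> 0"
  shows "s \<ge> 0 \<Longrightarrow> binomial_pmf n p \<bind> (\<lambda>U. Poi (s + real U * bt)) =
    Poi s \<bind> (\<lambda>x. map_pmf sum_list (replicate_pmf n (mix p (Poi bt) (return_pmf 0))) \<bind> (\<lambda>y. return_pmf (x+y)))"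
proof (induction n arbitrary: s)
  case 0
  then show ?case using p by (simp add: binomial_pmf_0 bind_return_pmf bind_return_pmf')
next
  case (Suc n)
  define R where "R = map_pmf sum_list (replicate_pmf n (mix p (Poi bt) (return_pmf 0)))"
  have "binomial_pmf (Suc n) p \<bind> (\<lambda>U. Poi (s + real U * bt)) =
    bernoulli_pmf p \<bind> (\<lambda>c. binomial_pmf n p \<bind> (\<lambda>k. Poi ((if c then s + bt else s) + real k * bt)))"
    using p by (simp add: binomial_pmf_Suc bind_assoc_pmf bind_return_pmf)
       (intro bind_pmf_cong refl, simp add: algebra_simps)
  also have "\<dots> = bernoulli_pmf p \<bind> (\<lambda>c. Poi s \<bind> (\<lambda>x. (if c then Poi bt else return_pmf 0) \<bind> (\<lambda>w. R \<bind> (\<lambda>r. return_pmf (x + (w + r))))))"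
  proof (rule bind_pmf_cong[OF refl])
    fix c :: bool
    show "binomial_pmf n p \<bind> (\<lambda>k. Poi ((if c then s + bt else s) + real k * bt)) =
       Poi s \<bind> (\<lambda>x. (if c then Poi bt else return_pmf 0) \<bind> (\<lambda>w. R \<bind> (\<lambda>r. return_pmf (x + (w + r)))))"
    proof (cases c)
      case True
      have "binomial_pmf n p \<bind> (\<lambda>k. Poi ((s + bt) + real k * bt)) = Poi (s + bt) \<bind> (\<lambda>x. R \<bind> (\<lambda>y. return_pmf (x+y)))"
        using Suc.IH[of "s + bt"] Suc.prems bb by (simp add: R_def)
      also have "\<dots> = Poi s \<bind> (\<lambda>x. Poi bt \<bind> (\<lambda>w. R \<bind> (\<lambda>r. return_pmf (x + (w + r)))))"
        by (simp add: Poi_add[OF Suc.prems bb, symmetric] bind_assoc_pmf bind_return_pmf add.assoc)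
      finally show ?thesis using True by simp
    next
      case False
      then show ?thesis using Suc.IH[of s] Suc.prems by (simp add: R_def bind_return_pmf)
    qed
  qed
  also have "\<dots> = Poi s \<bind> (\<lambda>x. bernoulli_pmf p \<bind> (\<lambda>c. (if c then Poi bt else return_pmf 0) \<bind> (\<lambda>w. R \<bind> (\<lambda>r. return_pmf (x + (w + r))))))"
    by (simp only: bind_commute_pmf[of "bernoulli_pmf p" "Poi s"])
  also have "\<dots> = Poi s \<bind> (\<lambda>x. map_pmf sum_list (replicate_pmf (Suc n) (mix p (Poi bt) (return_pmf 0))) \<bind> (\<lambda>y. return_pmf (x+y)))"
    by (simp only: R_def mix_def map_pmf_def bind_assoc_pmf bind_return_pmf replicate_pmf.simps sum_list.Cons)
  finally show ?case .
qed

lemma seqrep: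
  "replicate_pmf (length js) \<pi> \<bind> (\<lambda>XT. seq_pmf (map (\<lambda>(j,x). F j x) (zip js XT)))
    = seq_pmf (map (\<lambda>j. \<pi> \<bind> F j) js)"
proof (induction js)
  case Nil
  then show ?case by (simp add: bind_return_pmf)
next
  case (Cons j js)
  have "replicate_pmf (length (j#js)) \<pi> \<bind> (\<lambda>XT. seq_pmf (map (\<lambda>(j,x). F j x) (zip (j#js) XT)))
     = \<pi> \<bind> (\<lambda>x. replicate_pmf (length js) \<pi> \<bind> (\<lambda>XT. F j x \<bind> (\<lambda>y.
         seq_pmf (map (\<lambda>(j,x). F j x) (zip js XT)) \<bind> (\<lambda>ys. return_pmf (y#ys)))))"
    by (simp add: bind_assoc_pmf bind_return_pmf)
  also have "\<dots> = \<pi> \<bind> (\<lambda>x. F j x \<bind> (\<lambda>y. replicate_pmf (length js) \<pi> \<bind> (\<lambda>XT.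
         seq_pmf (map (\<lambda>(j,x). F j x) (zip js XT)) \<bind> (\<lambda>ys. return_pmf (y#ys)))))"
    by (rule bind_pmf_cong[OF refl], rule bind_commute_pmf)
  also have "\<dots> = seq_pmf (map (\<lambda>j. \<pi> \<bind> F j) (j#js))"
    by (simp add: Cons.IH[symmetric] bind_assoc_pmf)
  finally show ?case .
qed

lemma map_seq: "map_pmf (map h) (seq_pmf ps) = seq_pmf (map (map_pmf h) ps)"
proof (induction ps)
  case (Cons p ps)
  have "seq_pmf (map (map_pmf h) (p#ps)) = map_pmf h p \<bind> (\<lambda>y. map_pmf (map h) (seq_pmf ps) \<bind> (\<lambda>ys. return_pmf (y#ys)))"
    by (simp add: Cons.IH)
  also have "\<dots> = map_pmf (map h) (seq_pmf (p#ps))"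
    by (simp add: map_pmf_def bind_assoc_pmf bind_return_pmf)
  finally show ?case ..
qed simp

lemma PP_bind: "Poi r \<bind> (\<lambda>n. replicate_pmf n q \<bind> (\<lambda>xs. f (mset xs))) = PP r q \<bind> f"
  by (simp add: PP_def map_pmf_def bind_assoc_pmf bind_return_pmf)

lemma cnt0_PP:
  fixes r :: real
  assumes r: "r \<ge> 0" and d: "distinct (v#vs)"
  shows "map_pmf (\<lambda>M. count M v) (PP (r * real (length (v#vs))) (pmf_of_set (set (v#vs)))) = Poi r"
proof -
  have "map_pmf (\<lambda>M. count M v) (PPL r (v#vs)) = Poi r \<bind> (\<lambda>n. PPL r vs \<bind> (\<lambda>M. return_pmf (count (replicate_mset n v + M) v)))"
    by (simp add: map_pmf_def bind_assoc_pmf bind_return_pmf)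
  also have "\<dots> = Poi r \<bind> (\<lambda>n. PPL r vs \<bind> (\<lambda>M. return_pmf n))"
  proof (intro bind_pmf_cong refl)
    fix n M assume "M \<in> set_pmf (PPL r vs)"
    then have "v \<notin># M" using set_PPL d by fastforce
    then show "return_pmf (count (replicate_mset n v + M) v) = return_pmf n" by (simp add: not_in_iff)
  qed
  also have "\<dots> = Poi r" by (simp add: bind_return_pmf')
  finally show ?thesis using PP_uniform[OF r d] by simp
qed

lemma nth_shift:
  assumes "length XT + 1 = d"
  shows "map (\<lambda>i. g i ((x1#XT) ! (i - 1))) [2..<d+1] = map (\<lambda>(j,x). g j x) (zip [2..<d+1] XT)"
proof (rule nth_equalityI)
  show "length (map (\<lambda>i. g i ((x1#XT) ! (i - 1))) [2..<d+1]) = length (map (\<lambda>(j,x). g j x) (zip [2..<d+1] XT))"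
    using assms by simp
next
  fix i assume "i < length (map (\<lambda>i. g i ((x1#XT) ! (i - 1))) [2..<d+1])"
  then have i: "i < length XT" using assms by (simp del: upt_Suc)
  then show "map (\<lambda>i. g i ((x1#XT) ! (i - 1))) [2..<d+1] ! i = map (\<lambda>(j,x). g j x) (zip [2..<d+1] XT) ! i"
  proof -
    have u: "[2..<Suc d] ! i = Suc (Suc i)" using i assms by (subst nth_upt) auto
    show ?thesis using i assms by (simp add: nth_zip del: upt_Suc) (simp only: u, simp)
  qed
qed

lemma count_filter0: "length (filter (\<lambda>v. v = 0) xs) = count (mset xs) (0::nat)"
  by (induction xs) auto

lemma count_concat: "length (filter (\<lambda>v. v = 0) (concat cs)) = sum_list (map (\<lambda>c. count (mset c) (0::nat)) cs)"
  by (induction cs) (simp_all add: count_filter0)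

lemma Gcnt_aux:
  fixes d j :: nat and lam :: real
  assumes d2: "d \<ge> 2" and j: "2 \<le> j" "j \<le> d" and lam: "lam \<ge> 0"
  shows "map_pmf (\<lambda>c. count (mset c) (0::nat)) (Poi lam \<bind> (\<lambda>x. replicate_pmf x (pmf_of_set ({0..d}-{j})))) = Poi (lam / d)"
proof -
  define vs where "vs = sorted_list_of_set ({0..d}-{j}-{0})"
  have dv: "distinct (0#vs)" by (simp add: vs_def)
  have sv: "set (0#vs) = {0..d}-{j}" using j by (auto simp: vs_def)
  have "card ({0..d}-{j}-{0}) = d - 1" using j by (simp add: card_Diff_singleton_if)
  then have lv: "length (0#vs) = d" using d2 by (simp add: vs_def)
  have r: "lam / d * real (length (0#vs)) = lam" unfolding lv using d2 by simp
  have "map_pmf (\<lambda>c. count (mset c) (0::nat)) (Poi lam \<bind> (\<lambda>x. replicate_pmf x (pmf_of_set ({0..d}-{j}))))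
      = map_pmf (\<lambda>M. count M 0) (PP (lam / d * real (length (0#vs))) (pmf_of_set (set (0#vs))))"
    unfolding r sv PP_def by (simp add: map_bind_pmf map_pmf_comp)
  also have "\<dots> = Poi (lam / d)" by (rule cnt0_PP[OF _ dv]) (use lam in simp)
  finally show ?thesis .
qed

lemma count_mset_concat: "count (mset (concat cs)) x = sum_list (map (\<lambda>c. count (mset c) x) cs)"
  by (induction cs) simp_all

lemma opA_restr:
  assumes d2: "d \<ge> 2" and mu: "\<mu> > 0" and lam: "lam \<ge> 0"
  shows "opA d \<mu> (Poi lam) = PP \<mu> (pmf_of_set {0..d}) \<bind> (\<lambda>Ma. PP lam (pmf_of_set ({0..d}-{1})) \<bind> (\<lambda>Mb.
     seq_pmf (map (\<lambda>i. if i \<in># Ma + Mb then Poi (lam / d) else return_pmf 0) [2..<d+1]) \<bind>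
       (\<lambda>F. return_pmf (count Ma 0 + count Mb 0 + sum_list F))))"
proof -
  obtain d' where dd: "d = Suc d'" using d2 by (cases d) auto
  define Ua where "Ua = pmf_of_set {0..d}"
  define Ub where "Ub = pmf_of_set ({0..d}-{1})"
  define Ui where "Ui = (\<lambda>i. pmf_of_set ({0..d}-{i}))"
  define js where "js = [2..<d+1]"
  define G where "G = (\<lambda>a b j x. if j \<in> set (a @ b) then replicate_pmf x (Ui j) else return_pmf [])"
  define OUT where "OUT = (\<lambda>a b c. length (filter (\<lambda>v. v = (0::nat)) (a @ b @ concat c)))"
  define H where "H = (\<lambda>Ma Mb. seq_pmf (map (\<lambda>i. if i \<in># Ma + Mb then Poi (lam / d) else return_pmf 0) js) \<bind>
       (\<lambda>F. return_pmf (count Ma 0 + count Mb 0 + sum_list F)))"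
  have repd: "replicate_pmf d (Poi lam) = Poi lam \<bind> (\<lambda>x1. replicate_pmf d' (Poi lam) \<bind> (\<lambda>XT. return_pmf (x1#XT)))"
    by (simp add: dd)
  have E1: "opA d \<mu> (Poi lam) = Poi \<mu> \<bind> (\<lambda>X. Poi lam \<bind> (\<lambda>x1. replicate_pmf d' (Poi lam) \<bind> (\<lambda>XT.
     replicate_pmf X Ua \<bind> (\<lambda>a. replicate_pmf x1 Ub \<bind> (\<lambda>b.
     seq_pmf (map (\<lambda>(j,x). G a b j x) (zip js XT)) \<bind> (\<lambda>c. return_pmf (OUT a b c)))))))"
    unfolding opA_def
    apply (simp only: repd bind_assoc_pmf bind_return_pmf nth_Cons_0 Ua_def[symmetric] Ub_def[symmetric])
    apply (intro bind_pmf_cong refl)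
    subgoal for X x1 XT a b
      unfolding G_def js_def Ui_def OUT_def
      by (rule arg_cong[where f=seq_pmf], rule nth_shift) (auto simp: set_replicate_pmf dd)
    subgoal unfolding OUT_def by simp
    done
  have inner: "replicate_pmf d' (Poi lam) \<bind> (\<lambda>XT. seq_pmf (map (\<lambda>(j,x). G a b j x) (zip js XT)) \<bind>
      (\<lambda>c. return_pmf (OUT a b c))) = H (mset a) (mset b)" for a b
  proof -
    have lj: "length js = d'" by (simp add: js_def dd del: upt_Suc)
    have "replicate_pmf d' (Poi lam) \<bind> (\<lambda>XT. seq_pmf (map (\<lambda>(j,x). G a b j x) (zip js XT)) \<bind>
      (\<lambda>c. return_pmf (OUT a b c))) = (replicate_pmf (length js) (Poi lam) \<bind> (\<lambda>XT. seq_pmf (map (\<lambda>(j,x). G a b j x) (zip js XT)))) \<bind>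
      (\<lambda>c. return_pmf (OUT a b c))"
      by (simp only: lj bind_assoc_pmf)
    also have "\<dots> = seq_pmf (map (\<lambda>j. Poi lam \<bind> G a b j) js) \<bind> (\<lambda>c. return_pmf (OUT a b c))"
      by (simp only: seqrep)
    also have "\<dots> = map_pmf (map (\<lambda>c. count (mset c) (0::nat))) (seq_pmf (map (\<lambda>j. Poi lam \<bind> G a b j) js)) \<bind>
        (\<lambda>F. return_pmf (count (mset a) 0 + count (mset b) 0 + sum_list F))"
      by (simp add: bind_map_pmf OUT_def count_filter0 count_mset_concat add.assoc)
    also have "\<dots> = seq_pmf (map (\<lambda>j. map_pmf (\<lambda>c. count (mset c) (0::nat)) (Poi lam \<bind> G a b j)) js) \<bind>
        (\<lambda>F. return_pmf (count (mset a) 0 + count (mset b) 0 + sum_list F))"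
      by (simp only: map_seq map_map comp_def)
    also have "\<dots> = H (mset a) (mset b)"
      unfolding H_def
    proof (intro arg_cong2[where f=bind_pmf] refl arg_cong[where f=seq_pmf] map_cong)
      fix j assume "j \<in> set js"
      then have j: "2 \<le> j" "j \<le> d" by (auto simp: js_def)
      show "map_pmf (\<lambda>c. count (mset c) (0::nat)) (Poi lam \<bind> G a b j) =
        (if j \<in># mset a + mset b then Poi (lam / d) else return_pmf 0)"
      proof (cases "j \<in> set (a @ b)")
        case True
        then show ?thesis using Gcnt_aux[OF d2 j lam] by (simp add: G_def Ui_def)
      next
        case False
        then show ?thesis by (simp add: G_def)
      qed
    qed
    finally show ?thesis .
  qed
  have E2: "Poi \<mu> \<bind> (\<lambda>X. Poi lam \<bind> (\<lambda>x1. replicate_pmf d' (Poi lam) \<bind> (\<lambda>XT.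
     replicate_pmf X Ua \<bind> (\<lambda>a. replicate_pmf x1 Ub \<bind> (\<lambda>b.
     seq_pmf (map (\<lambda>(j,x). G a b j x) (zip js XT)) \<bind> (\<lambda>c. return_pmf (OUT a b c)))))))
    = Poi \<mu> \<bind> (\<lambda>X. replicate_pmf X Ua \<bind> (\<lambda>a. Poi lam \<bind> (\<lambda>x1. replicate_pmf x1 Ub \<bind> (\<lambda>b.
      replicate_pmf d' (Poi lam) \<bind> (\<lambda>XT.
     seq_pmf (map (\<lambda>(j,x). G a b j x) (zip js XT)) \<bind> (\<lambda>c. return_pmf (OUT a b c)))))))"
    apply (rule bind_pmf_cong[OF refl])
    apply (rule trans[OF comm3])
    apply (rule bind_pmf_cong[OF refl])+
    apply (rule bind_commute_pmf)
    done
  have E3: "Poi \<mu> \<bind> (\<lambda>X. replicate_pmf X Ua \<bind> (\<lambda>a. Poi lam \<bind> (\<lambda>x1. replicate_pmf x1 Ub \<bind> (\<lambda>b.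
      H (mset a) (mset b))))) = PP \<mu> Ua \<bind> (\<lambda>Ma. PP lam Ub \<bind> (\<lambda>Mb. H Ma Mb))"
  proof -
    have "Poi lam \<bind> (\<lambda>x1. replicate_pmf x1 Ub \<bind> (\<lambda>b. H (mset a) (mset b))) = PP lam Ub \<bind> H (mset a)" for a
      by (rule PP_bind)
    then have "Poi \<mu> \<bind> (\<lambda>X. replicate_pmf X Ua \<bind> (\<lambda>a. Poi lam \<bind> (\<lambda>x1. replicate_pmf x1 Ub \<bind> (\<lambda>b.
      H (mset a) (mset b))))) = Poi \<mu> \<bind> (\<lambda>X. replicate_pmf X Ua \<bind> (\<lambda>a. (\<lambda>Ma. PP lam Ub \<bind> H Ma) (mset a)))"
      by simp
    also have "\<dots> = PP \<mu> Ua \<bind> (\<lambda>Ma. PP lam Ub \<bind> H Ma)"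
      by (rule PP_bind)
    finally show ?thesis by simp
  qed
  show ?thesis
    using E1 E2 E3 inner by (simp add: H_def Ua_def Ub_def js_def)
qed

theorem mainTheorem9:
  fixes d :: nat and \<mu> lam :: real
  assumes "d \<ge> 2" and "\<mu> > 0" and "lam \<ge> 0"
  shows "opA d \<mu> (Poi lam) =
    do {
      U \<leftarrow> binomial_pmf (d - 1) (1 - exp (- lam / d - \<mu> / (d + 1)));
      Poi ((real U + 1) * lam / d + \<mu> / (d + 1))
    }"
proof -
  note d2 = assms(1) and mu = assms(2) and lam = assms(3)
  define al where "al = \<mu> / real (d + 1)"
  define be where "be = lam / real d"
  define js where "js = [2..<d+1]"
  define p where "p = 1 - exp (- (al + be))"
  define W where "W = mix p (Poi be) (return_pmf 0)"
  define Sq where "Sq = (\<lambda>A B. seq_pmf (map (\<lambda>i. if i \<in># A + B then Poi be else return_pmf (0::nat)) js))"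
  have al0: "al \<ge> 0" using mu by (simp add: al_def)
  have be0: "be \<ge> 0" using lam by (simp add: be_def)
  have lj: "length js = d - 1" by (simp add: js_def del: upt_Suc)
  have p01: "0 \<le> p" "p \<le> 1" using al0 be0 by (auto simp: p_def)
  have djs: "distinct (0#1#js)" by (simp add: js_def del: upt_Suc)
  have S1: "PP \<mu> (pmf_of_set {0..d}) = PPL al (0#1#js)"
  proof -
    have "{0..d} = set (0#1#js)" using d2 by (auto simp: js_def del: upt_Suc)
    moreover have "\<mu> = al * real (length (0#1#js))" using d2 by (simp add: lj al_def of_nat_diff)
    ultimately show ?thesis using PP_uniform[OF al0 djs] by simp
  qed
  have S2: "PP lam (pmf_of_set ({0..d}-{1})) = PPL be (0#js)"
  proof -
    have "{0..d}-{1} = set (0#js)" using d2 by (auto simp: js_def del: upt_Suc)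
    moreover have "lam = be * real (length (0#js))" using d2 by (simp add: lj be_def of_nat_diff)
    ultimately show ?thesis using PP_uniform[OF be0, of "0#js"] djs by simp
  qed
  have "opA d \<mu> (Poi lam) = PPL al (0#1#js) \<bind> (\<lambda>Ma. PPL be (0#js) \<bind> (\<lambda>Mb.
     seq_pmf (map (\<lambda>i. if i \<in># Ma + Mb then Poi be else return_pmf 0) js) \<bind>
       (\<lambda>F. return_pmf (count Ma 0 + count Mb 0 + sum_list F))))"
    unfolding opA_restr[OF d2 mu lam] js_def[symmetric] be_def[symmetric] S1 S2 by (rule refl)
  also have "\<dots> = Poi al \<bind> (\<lambda>n0. Poi al \<bind> (\<lambda>n1. PPL al js \<bind> (\<lambda>A. Poi be \<bind> (\<lambda>m0. PPL be js \<bind> (\<lambda>B.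
     Sq A B \<bind> (\<lambda>F. return_pmf (n0 + m0 + sum_list F)))))))"
    apply (simp only: PPL.simps bind_assoc_pmf bind_return_pmf)
    apply (intro bind_pmf_cong refl)
    subgoal for n0 n1 A m0 B
      unfolding Sq_def by (intro arg_cong[where f=seq_pmf] map_cong refl) (auto simp: js_def)
    subgoal for n0 n1 A m0 B
    proof -
      assume "A \<in> set_pmf (PPL al js)" "B \<in> set_pmf (PPL be js)"
      then have "0 \<notin># A" "0 \<notin># B" using set_PPL[of A al js] set_PPL[of B be js] by (auto simp: js_def)
      then show ?thesis by (simp add: not_in_iff)
    qed
    done
  also have "\<dots> = Poi al \<bind> (\<lambda>n0. Poi be \<bind> (\<lambda>m0. PPL al js \<bind> (\<lambda>A. PPL be js \<bind> (\<lambda>B.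
     Sq A B \<bind> (\<lambda>F. return_pmf (n0 + m0 + sum_list F))))))"
    by (simp only: bind_pmf_const bind_commute_pmf[of "PPL al js" "Poi be"])
  also have "\<dots> = (Poi al \<bind> (\<lambda>n0. Poi be \<bind> (\<lambda>m0. return_pmf (n0 + m0)))) \<bind> (\<lambda>x.
      (PPL al js \<bind> (\<lambda>A. PPL be js \<bind> (\<lambda>B. Sq A B \<bind> (\<lambda>F. return_pmf (sum_list F))))) \<bind> (\<lambda>s. return_pmf (x + s)))"
    by (simp only: bind_assoc_pmf bind_return_pmf add.assoc)
  also have "\<dots> = Poi (al + be) \<bind> (\<lambda>x. map_pmf sum_list (replicate_pmf (d - 1) W) \<bind> (\<lambda>s. return_pmf (x + s)))"
    unfolding Poi_add[OF al0 be0] Sq_def Core[OF al0 be0 distinct_upt[of 2 "d+1", folded js_def]] lj W_def p_def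
    by (rule refl)
  also have "\<dots> = binomial_pmf (d - 1) p \<bind> (\<lambda>U. Poi ((al + be) + real U * be))"
    unfolding W_def by (rule binmix[OF p01 be0, symmetric]) (use al0 be0 in simp)
  also have "\<dots> = do {
      U \<leftarrow> binomial_pmf (d - 1) (1 - exp (- lam / d - \<mu> / (d + 1)));
      Poi ((real U + 1) * lam / d + \<mu> / (d + 1))
    }"
  proof -
    have "p = 1 - exp (- lam / d - \<mu> / (d + 1))" by (simp add: p_def al_def be_def)
    moreover have "(al + be) + real U * be = (real U + 1) * lam / d + \<mu> / (d + 1)" for U
    proof -
      have "(real U + 1) * lam / real d = real U * (lam / real d) + lam / real d"
        by (simp add: distrib_right add_divide_distrib)
      then show ?thesis by (simp add: al_def be_def)
    qed
    ultimately show ?thesis by simp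
  qed
  finally show ?thesis .
qed
end
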